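(* Let $\mathbf{H}$ be a Heyting algebra with canonical frame $(X,\perp,Y,T)$. Then the lattice $\mathcal G(X)$ of stable sets of filters is a complete Heyting algebra and a canonical extension of $\mathbf H$, with $\mathbf H$ identified (via $a\mapsto X_a=\{x\in X:a\in x\}$) with the subalgebra $\mathrm{KO}\mathcal G(X)$ of compact-open stable sets. Its implication, the residual of intersection, is given by $A\Rightarrow C=\{u\in X:\forall z\in X\,(z\in A\text{ and }u\le z\text{ imply }z\in C)\}$, and this coincides with $A\Rightarrow_T C=\{u\in X:\forall x\in X\,\forall y\in Y\,(x\in A\text{ and }C\perp y\text{ imply }uT'xy)\}$.
   Context: The canonical frame of $\mathbf H$: $X$ is the set of filters of $\mathbf H$, $Y$ the set of ideals, $x\perp y$ iff $x\cap y\neq\emptyset$; for $x\in X,v\in Y$, $x\leadsto v$ is the ideal generated by $\{a\to b:a\in x,b\in v\}$, and $yTxv$ iff $x\leadsto v\subseteq y$. For $U\subseteq X$, $U'=\{y:\forall x\in U\ x\perp y\}$; for $V\subseteq Y$, ${}'V=\{x:\forall y\in V\ x\perp y\}$; $A\subseteq X$ is stable if $A={}'(A')$; $\mathcal G(X)$ is the complete lattice of stable sets (meet is intersection, join is closure of union). $u\le z$ on $X$ iff $\{u\}'\subseteq\{z\}'$ (i.e. $u\subseteq z$ as filters). $C\perp y$ means $c\perp y$ for all $c\in C$. $uT'xy$ iff $\forall v\in Y(vTxy\Rightarrow u\perp v)$. $X$ carries the topology generated by the basis $\{X_a:a\in H\}$; $\mathrm{KO}\mathcal G(X)$ is the set of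 stable sets compact and open in this topology. Canonical extension is in the sense of Gehrke–Harding. *)

theory Defs
  imports "HOL-Analysis.Analysis"
begin

definition heyting_alg :: "('a::bounded_lattice \<Rightarrow> 'a \<Rightarrow> 'a) \<Rightarrow> bool" where
  "heyting_alg imp \<longleftrightarrow> (\<forall>a b c. inf a b \<le> c \<longleftrightarrow> a \<le> imp b c)"

section \<open>Filters and ideals (improper ones included)\<close>

definition is_filter :: "'a::bounded_lattice set \<Rightarrow> bool" where
  "is_filter F \<longleftrightarrow> F \<noteq> {} \<and> (\<forall>a\<in>F. \<forall>b. a \<le> b \<longrightarrow> b \<in> F) \<and> (\<forall>a\<in>F. \<forall>b\<in>F. inf a b \<in> F)"

definition is_ideal :: "'a::bounded_lattice set \<Rightarrow> bool" where
  "is_ideal I \<longleftrightarrow> I \<noteq> {} \<and> (\<forall>a\<in>I. \<forall>b. b \<le> a \<longrightarrow> b \<in> I) \<and> (\<forall>a\<in>I. \<forall>b\<in>I. sup a b \<in> I)"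

definition filtersX :: "'a::bounded_lattice set set" where
  "filtersX = {F. is_filter F}"

definition idealsY :: "'a::bounded_lattice set set" where
  "idealsY = {I. is_ideal I}"

definition ideal_gen :: "'a::bounded_lattice set \<Rightarrow> 'a set" where
  "ideal_gen S = \<Inter>{I. is_ideal I \<and> S \<subseteq> I}"

definition perp :: "'a set \<Rightarrow> 'a set \<Rightarrow> bool" where
  "perp x y \<longleftrightarrow> x \<inter> y \<noteq> {}"

definition leadsto :: "('a::bounded_lattice \<Rightarrow> 'a \<Rightarrow> 'a) \<Rightarrow> 'a set \<Rightarrow> 'a set \<Rightarrow> 'a set" where
  "leadsto imp x v = ideal_gen {imp a b | a b. a \<in> x \<and> b \<in> v}"

text \<open>\<open>relT imp y x v\<close> is \<open>yTxv\<close>.\<close>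
definition relT :: "('a::bounded_lattice \<Rightarrow> 'a \<Rightarrow> 'a) \<Rightarrow> 'a set \<Rightarrow> 'a set \<Rightarrow> 'a set \<Rightarrow> bool" where
  "relT imp y x v \<longleftrightarrow> leadsto imp x v \<subseteq> y"

text \<open>\<open>relT' imp u x y\<close> is \<open>uT'xy\<close>.\<close>
definition relT' :: "('a::bounded_lattice \<Rightarrow> 'a \<Rightarrow> 'a) \<Rightarrow> 'a set \<Rightarrow> 'a set \<Rightarrow> 'a set \<Rightarrow> bool" where
  "relT' imp u x y \<longleftrightarrow> (\<forall>v\<in>idealsY. relT imp v x y \<longrightarrow> perp u v)"

text \<open>\<open>rperp U\<close> is \<open>U'\<close>, \<open>lperp V\<close> is \<open>'V\<close>.\<close>
definition rperp :: "'a::bounded_lattice set set \<Rightarrow> 'a set set" where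
  "rperp U = {y\<in>idealsY. \<forall>x\<in>U. perp x y}"

definition lperp :: "'a::bounded_lattice set set \<Rightarrow> 'a set set" where
  "lperp V = {x\<in>filtersX. \<forall>y\<in>V. perp x y}"

definition stable :: "'a::bounded_lattice set set \<Rightarrow> bool" where
  "stable A \<longleftrightarrow> A = lperp (rperp A)"

definition GX :: "'a::bounded_lattice set set set" where
  "GX = {A. stable A}"

definition GInf :: "'a::bounded_lattice set set set \<Rightarrow> 'a set set" where
  "GInf S = filtersX \<inter> \<Inter>S"

definition GSup :: "'a::bounded_lattice set set set \<Rightarrow> 'a set set" where
  "GSup S = lperp (rperp (\<Union>S))"

definition leX :: "'a::bounded_lattice set \<Rightarrow> 'a set \<Rightarrow> bool" where
  "leX u z \<longleftrightarrow> rperp {u} \<subseteq> rperp {z}"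

definition Xa :: "'a::bounded_lattice \<Rightarrow> 'a set set" where
  "Xa a = {x\<in>filtersX. a \<in> x}"

definition Gimp :: "'a::bounded_lattice set set \<Rightarrow> 'a set set \<Rightarrow> 'a set set" where
  "Gimp A C = {u\<in>filtersX. \<forall>z\<in>filtersX. z \<in> A \<and> leX u z \<longrightarrow> z \<in> C}"

definition GimpT :: "('a::bounded_lattice \<Rightarrow> 'a \<Rightarrow> 'a) \<Rightarrow> 'a set set \<Rightarrow> 'a set set \<Rightarrow> 'a set set" where
  "GimpT imp A C = {u\<in>filtersX. \<forall>x\<in>filtersX. \<forall>y\<in>idealsY.
      x \<in> A \<and> (\<forall>c\<in>C. perp c y) \<longrightarrow> relT' imp u x y}"

definition topX :: "'a::bounded_lattice set topology" where
  "topX = topology_generated_by (range Xa)"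

definition KOGX :: "'a::bounded_lattice set set set" where
  "KOGX = {A\<in>GX. openin topX A \<and> compactin topX A}"

definition complete_lattice_on ::
  "'b set set \<Rightarrow> ('b set set \<Rightarrow> 'b set) \<Rightarrow> ('b set set \<Rightarrow> 'b set) \<Rightarrow> bool" where
  "complete_lattice_on L Inf_L Sup_L \<longleftrightarrow>
     (\<forall>S\<subseteq>L. Inf_L S \<in> L \<and> (\<forall>A\<in>S. Inf_L S \<subseteq> A) \<and> (\<forall>B\<in>L. (\<forall>A\<in>S. B \<subseteq> A) \<longrightarrow> B \<subseteq> Inf_L S)) \<and>
     (\<forall>S\<subseteq>L. Sup_L S \<in> L \<and> (\<forall>A\<in>S. A \<subseteq> Sup_L S) \<and> (\<forall>B\<in>L. (\<forall>A\<in>S. A \<subseteq> B) \<longrightarrow> Sup_L S \<subseteq> B))"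

text \<open>Gehrke--Harding canonical extension: \<open>e\<close> is a (bounded) lattice embedding of
the bounded lattice \<open>'a\<close> into the complete lattice \<open>L\<close> which is dense and compact.\<close>
definition canonical_extension ::
  "'b set set \<Rightarrow> ('b set set \<Rightarrow> 'b set) \<Rightarrow> ('b set set \<Rightarrow> 'b set) \<Rightarrow> ('a::bounded_lattice \<Rightarrow> 'b set) \<Rightarrow> bool" where
  "canonical_extension L Inf_L Sup_L e \<longleftrightarrow>
     complete_lattice_on L Inf_L Sup_L \<and>
     range e \<subseteq> L \<and> inj e \<and>
     (\<forall>a b. e (inf a b) = Inf_L {e a, e b}) \<and>
     (\<forall>a b. e (sup a b) = Sup_L {e a, e b}) \<and>
     e bot = Sup_L {} \<and> e top = Inf_L {} \<and>
     (\<forall>A\<in>L. \<exists>\<S>. A = Sup_L {Inf_L (e ` S) | S. S \<in> \<S>}) \<and>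
     (\<forall>A\<in>L. \<exists>\<S>. A = Inf_L {Sup_L (e ` S) | S. S \<in> \<S>}) \<and>
     (\<forall>S T. Inf_L (e ` S) \<subseteq> Sup_L (e ` T) \<longrightarrow>
        (\<exists>S'\<subseteq>S. \<exists>T'\<subseteq>T. finite S' \<and> finite T' \<and> Inf_L (e ` S') \<subseteq> Sup_L (e ` T')))"

end

theory Submission
  imports Defs
begin

lemma filter_top: "is_filter (F::'a::bounded_lattice set) \<Longrightarrow> top \<in> F"
  unfolding is_filter_def by auto

lemma ideal_bot: "is_ideal (I::'a::bounded_lattice set) \<Longrightarrow> bot \<in> I"
  unfolding is_ideal_def by auto

lemma filter_up: "is_filter F \<Longrightarrow> a \<in> F \<Longrightarrow> a \<le> b \<Longrightarrow> b \<in> F"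
  unfolding is_filter_def by auto

lemma filter_inf: "is_filter F \<Longrightarrow> a \<in> F \<Longrightarrow> b \<in> F \<Longrightarrow> inf a b \<in> F"
  unfolding is_filter_def by auto

lemma ideal_down: "is_ideal I \<Longrightarrow> a \<in> I \<Longrightarrow> b \<le> a \<Longrightarrow> b \<in> I"
  unfolding is_ideal_def by auto

lemma ideal_sup: "is_ideal I \<Longrightarrow> a \<in> I \<Longrightarrow> b \<in> I \<Longrightarrow> sup a b \<in> I"
  unfolding is_ideal_def by auto

lemma pfilter: "is_filter {c::'a::bounded_lattice. a \<le> c}"
  unfolding is_filter_def by auto

lemma pideal: "is_ideal {c::'a::bounded_lattice. c \<le> a}"
  unfolding is_ideal_def by auto

lemma perp_pideal: "is_filter x \<Longrightarrow> perp x {c. c \<le> a} \<longleftrightarrow> a \<in> x"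
  unfolding perp_def using filter_up by fastforce

lemma perp_pfilter: "is_ideal y \<Longrightarrow> perp {c. a \<le> c} y \<longleftrightarrow> a \<in> y"
  unfolding perp_def using ideal_down by fastforce

lemma pfilter_X: "{c::'a::bounded_lattice. a \<le> c} \<in> filtersX"
  using pfilter unfolding filtersX_def by auto

lemma pideal_Y: "{c::'a::bounded_lattice. c \<le> a} \<in> idealsY"
  using pideal unfolding idealsY_def by auto

section \<open>Galois connection\<close>

lemma lperp_anti: "V \<subseteq> W \<Longrightarrow> lperp W \<subseteq> lperp V"
  unfolding lperp_def by auto

lemma rperp_anti: "V \<subseteq> W \<Longrightarrow> rperp W \<subseteq> rperp V"
  unfolding rperp_def by auto

lemma ext_l: "U \<subseteq> filtersX \<Longrightarrow> U \<subseteq> lperp (rperp U)"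
  unfolding lperp_def rperp_def perp_def by auto

lemma lperp_sub: "lperp V \<subseteq> filtersX"
  unfolding lperp_def by auto

lemma stable_sub: "stable A \<Longrightarrow> A \<subseteq> filtersX"
  unfolding stable_def using lperp_sub by metis

lemma stable_closure: "stable (lperp (rperp U))"
proof -
  have "rperp U \<subseteq> rperp (lperp (rperp U))"
    unfolding lperp_def rperp_def perp_def by auto
  then have "lperp (rperp (lperp (rperp U))) \<subseteq> lperp (rperp U)" by (rule lperp_anti)
  moreover have "lperp (rperp U) \<subseteq> lperp (rperp (lperp (rperp U)))"
    by (rule ext_l[OF lperp_sub])
  ultimately show ?thesis unfolding stable_def by blast
qed

lemma stable_up:
  assumes "stable A" "x \<in> A" "is_filter z" "x \<subseteq> z" shows "z \<in> A"
proof -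
  have "x \<in> lperp (rperp A)" using assms stable_def by blast
  then have "z \<in> lperp (rperp A)"
    using assms unfolding lperp_def perp_def filtersX_def by blast
  then show ?thesis using assms stable_def by blast
qed

lemma in_lperp_pideal:
  "x \<in> lperp V \<Longrightarrow> {c. c \<le> a} \<in> V \<Longrightarrow> a \<in> x"
  unfolding lperp_def filtersX_def using perp_pideal by blast

lemma leX_iff: "is_filter z \<Longrightarrow> leX u z \<longleftrightarrow> u \<subseteq> z"
proof
  assume z: "is_filter z" and l: "leX u z"
  show "u \<subseteq> z"
  proof
    fix a assume "a \<in> u"
    then have "{c. c \<le> a} \<in> rperp {u}"
      unfolding rperp_def perp_def using pideal_Y by auto
    then have "perp z {c. c \<le> a}" using l unfolding leX_def rperp_def by auto
    then show "a \<in> z" using perp_pideal z by blast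
  qed
next
  assume "u \<subseteq> z" then show "leX u z"
    unfolding leX_def rperp_def perp_def by auto
qed

lemma hres: "heyting_alg imp \<Longrightarrow> inf x a \<le> b \<longleftrightarrow> x \<le> imp a b"
  unfolding heyting_alg_def by blast

lemma hmp: "heyting_alg imp \<Longrightarrow> inf (imp a b) a \<le> b"
  using hres by blast

lemma imp_mono: assumes H: "heyting_alg imp" and "a' \<le> a" "b \<le> b'"
  shows "imp a b \<le> imp a' b'"
proof -
  have "inf (imp a b) a' \<le> inf (imp a b) a" using assms by (simp add: le_infI2)
  also have "\<dots> \<le> b" using hmp[OF H] .
  finally show ?thesis using hres[OF H] assms(3) by (meson order_trans)
qed

definition Dset :: "('a::bounded_lattice \<Rightarrow> 'a \<Rightarrow> 'a) \<Rightarrow> 'a set \<Rightarrow> 'a set \<Rightarrow> 'a set" where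
  "Dset imp z y = {c. \<exists>a\<in>z. \<exists>b\<in>y. c \<le> imp a b}"

lemma Dset_ideal: assumes H: "heyting_alg imp" and z: "is_filter z" and y: "is_ideal y"
  shows "is_ideal (Dset imp z y)"
  unfolding is_ideal_def
proof (intro conjI ballI allI impI)
  show "Dset imp z y \<noteq> {}" using filter_top[OF z] ideal_bot[OF y] unfolding Dset_def by blast
next
  fix a b assume "a \<in> Dset imp z y" "b \<le> a"
  then show "b \<in> Dset imp z y" unfolding Dset_def using order_trans by blast
next
  fix c1 c2 assume "c1 \<in> Dset imp z y" "c2 \<in> Dset imp z y"
  then obtain a1 b1 a2 b2 where "a1 \<in> z" "b1 \<in> y" "c1 \<le> imp a1 b1" "a2 \<in> z" "b2 \<in> y" "c2 \<le> imp a2 b2"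
    unfolding Dset_def by blast
  moreover have "imp a1 b1 \<le> imp (inf a1 a2) (sup b1 b2)" by (rule imp_mono[OF H]) auto
  moreover have "imp a2 b2 \<le> imp (inf a1 a2) (sup b1 b2)" by (rule imp_mono[OF H]) auto
  ultimately have "sup c1 c2 \<le> imp (inf a1 a2) (sup b1 b2)"
    by (meson le_supI order_trans)
  moreover have "inf a1 a2 \<in> z" using filter_inf[OF z] calculation `a1 \<in> z` `a2 \<in> z` by blast
  moreover have "sup b1 b2 \<in> y" using ideal_sup[OF y] `b1 \<in> y` `b2 \<in> y` by blast
  ultimately show "sup c1 c2 \<in> Dset imp z y" unfolding Dset_def by blast
qed

lemma gens_sub_ideal_gen: "S \<subseteq> ideal_gen S"
  unfolding ideal_gen_def by auto

lemma ideal_gen_least: "is_ideal I \<Longrightarrow> S \<subseteq> I \<Longrightarrow> ideal_gen S \<subseteq> I"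
  unfolding ideal_gen_def by auto

lemma leadsto_sub_Dset:
  "leadsto imp z y \<subseteq> Dset imp z y" if "heyting_alg imp" "is_filter z" "is_ideal y"
  unfolding leadsto_def
  by (rule ideal_gen_least[OF Dset_ideal[OF that]]) (auto simp: Dset_def)

definition Jf :: "'a::bounded_lattice set \<Rightarrow> 'a set \<Rightarrow> 'a set" where
  "Jf w z = {c. \<exists>p\<in>w. \<exists>q\<in>z. inf p q \<le> c}"

lemma Jf_filter: assumes w: "is_filter w" and z: "is_filter z" shows "is_filter (Jf w z)"
  unfolding is_filter_def
proof (intro conjI ballI allI impI)
  show "Jf w z \<noteq> {}" using filter_top[OF z] filter_top[OF w] unfolding Jf_def by blast
next
  fix a b assume "a \<in> Jf w z" "a \<le> b" then show "b \<in> Jf w z"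
    unfolding Jf_def using order_trans by blast
next
  fix a b assume "a \<in> Jf w z" "b \<in> Jf w z"
  then obtain p1 q1 p2 q2 where m: "p1 \<in> w" "q1 \<in> z" "inf p1 q1 \<le> a" "p2 \<in> w" "q2 \<in> z" "inf p2 q2 \<le> b"
    unfolding Jf_def by blast
  moreover have "inf (inf p1 p2) (inf q1 q2) \<le> inf (inf p1 q1) (inf p2 q2)"
    by (simp add: inf.coboundedI1 inf.coboundedI2 le_infI1 le_infI2)
  ultimately have "inf (inf p1 p2) (inf q1 q2) \<le> inf a b"
    by (meson inf_mono order_trans)
  then show "inf a b \<in> Jf w z" unfolding Jf_def
    using filter_inf[OF w] filter_inf[OF z] m by blast
qed

lemma Jf_left: assumes "is_filter z" shows "w \<subseteq> Jf w z"
proof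
  fix p assume "p \<in> w"
  moreover have "top \<in> z" using filter_top[OF assms] .
  moreover have "inf p top \<le> p" by simp
  ultimately show "p \<in> Jf w z" unfolding Jf_def by blast
qed

lemma Jf_right: assumes "is_filter w" shows "z \<subseteq> Jf w z"
proof
  fix q assume "q \<in> z"
  moreover have "top \<in> w" using filter_top[OF assms] .
  moreover have "inf top q \<le> q" by simp
  ultimately show "q \<in> Jf w z" unfolding Jf_def by blast
qed


section \<open>Complete lattice\<close>

lemma GX_complete: "complete_lattice_on (GX :: 'a::bounded_lattice set set set) GInf GSup"
  unfolding complete_lattice_on_def
proof (intro conjI allI impI ballI)
  fix S :: "'a set set set" assume S: "S \<subseteq> GX"
  have sub: "GInf S \<subseteq> filtersX" unfolding GInf_def by auto
  have "lperp (rperp (GInf S)) \<subseteq> GInf S"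
  proof
    fix x assume x: "x \<in> lperp (rperp (GInf S))"
    have "x \<in> A" if "A \<in> S" for A
    proof -
      have "GInf S \<subseteq> A" using that unfolding GInf_def by auto
      then have "lperp (rperp (GInf S)) \<subseteq> lperp (rperp A)" by (intro lperp_anti rperp_anti)
      then show ?thesis using x S that unfolding GX_def stable_def by auto
    qed
    then show "x \<in> GInf S" using x lperp_sub unfolding GInf_def by auto
  qed
  then show "GInf S \<in> GX" using ext_l[OF sub] unfolding GX_def stable_def by auto
  show "\<And>A. A \<in> S \<Longrightarrow> GInf S \<subseteq> A" unfolding GInf_def by auto
  show "\<And>B. B \<in> GX \<Longrightarrow> \<forall>A\<in>S. B \<subseteq> A \<Longrightarrow> B \<subseteq> GInf S"
    unfolding GInf_def GX_def using stable_sub by auto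
next
  fix S :: "'a set set set" assume S: "S \<subseteq> GX"
  show "GSup S \<in> GX" unfolding GSup_def GX_def using stable_closure by auto
  have U: "\<Union>S \<subseteq> filtersX" using S stable_sub unfolding GX_def by auto
  show "\<And>A. A \<in> S \<Longrightarrow> A \<subseteq> GSup S" unfolding GSup_def using ext_l[OF U] by auto
  fix B assume B: "B \<in> GX" "\<forall>A\<in>S. A \<subseteq> B"
  then have "\<Union>S \<subseteq> B" by auto
  then have "lperp (rperp (\<Union>S)) \<subseteq> lperp (rperp B)" by (intro lperp_anti rperp_anti)
  then show "GSup S \<subseteq> B" using B unfolding GSup_def GX_def stable_def by auto
qed

section \<open>Implication\<close>

lemma Gimp_sub: "Gimp A C \<subseteq> filtersX" unfolding Gimp_def by auto

lemma Gimp_stable: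
  fixes imp :: "'a::bounded_lattice \<Rightarrow> 'a \<Rightarrow> 'a" and A C :: "'a set set"
  assumes H: "heyting_alg imp" and A: "stable A" and C: "stable C"
  shows "stable (Gimp A C)"
proof -
  have "lperp (rperp (Gimp A C)) \<subseteq> Gimp A C"
  proof
    fix u assume u: "u \<in> lperp (rperp (Gimp A C))"
    then have uf: "is_filter u" using lperp_sub unfolding filtersX_def by auto
    show "u \<in> Gimp A C"
    proof (rule ccontr)
      assume "u \<notin> Gimp A C"
      then obtain z where z: "is_filter z" "z \<in> A" "u \<subseteq> z" "z \<notin> C"
        using uf leX_iff unfolding Gimp_def filtersX_def by auto
      then have "z \<notin> lperp (rperp C)" using C unfolding stable_def by auto
      then obtain y where y: "y \<in> rperp C" "\<not> perp z y"
        using z unfolding lperp_def filtersX_def by auto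
      have yi: "is_ideal y" using y unfolding rperp_def idealsY_def by auto
      have D: "Dset imp z y \<in> rperp (Gimp A C)"
        unfolding rperp_def
      proof (intro CollectI conjI ballI)
        show "Dset imp z y \<in> idealsY" using Dset_ideal[OF H z(1) yi] unfolding idealsY_def by auto
        fix w assume w: "w \<in> Gimp A C"
        then have wf: "is_filter w" unfolding Gimp_def filtersX_def by auto
        have Jf: "is_filter (Jf w z)" using Jf_filter[OF wf z(1)] .
        have "Jf w z \<in> A" using stable_up[OF A z(2) Jf Jf_right[OF wf]] .
        moreover have "leX w (Jf w z)" using leX_iff[OF Jf] Jf_left[OF z(1)] by auto
        ultimately have "Jf w z \<in> C" using w Jf unfolding Gimp_def filtersX_def by auto
        then have "perp (Jf w z) y" using y unfolding rperp_def by auto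
        then obtain c p q where "c \<in> y" "p \<in> w" "q \<in> z" "inf p q \<le> c"
          unfolding perp_def Jf_def by auto
        then have "inf p q \<in> y" using ideal_down[OF yi] by auto
        moreover have "p \<le> imp q (inf p q)" using hres[OF H] by auto
        ultimately have "imp q (inf p q) \<in> w" "imp q (inf p q) \<in> Dset imp z y"
          using filter_up[OF wf] `p \<in> w` `q \<in> z` unfolding Dset_def by auto
        then show "perp w (Dset imp z y)" unfolding perp_def by auto
      qed
      then have "perp u (Dset imp z y)" using u unfolding lperp_def by auto
      then obtain c a b where "c \<in> u" "a \<in> z" "b \<in> y" "c \<le> imp a b"
        unfolding perp_def Dset_def by auto
      then have "imp a b \<in> z" using filter_up[OF uf] z(3) by auto
      then have "inf (imp a b) a \<in> z" using filter_inf[OF z(1)] `a \<in> z` by auto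
      then have "b \<in> z" using filter_up[OF z(1)] hmp[OF H] by blast
      then show False using y `b \<in> y` unfolding perp_def by auto
    qed
  qed
  then show ?thesis using ext_l[OF Gimp_sub] unfolding stable_def by auto
qed

lemma Gimp_res:
  assumes A: "stable A" and B: "stable B"
  shows "B \<inter> A \<subseteq> C \<longleftrightarrow> B \<subseteq> Gimp A C"
proof
  assume h: "B \<inter> A \<subseteq> C"
  show "B \<subseteq> Gimp A C"
  proof
    fix u assume u: "u \<in> B"
    have "z \<in> C" if "z \<in> filtersX" "z \<in> A" "leX u z" for z
    proof -
      have "is_filter z" using that unfolding filtersX_def by auto
      then have "z \<in> B" using stable_up[OF B u] that leX_iff by blast
      then show ?thesis using h that by auto
    qed
    then show "u \<in> Gimp A C" using u stable_sub[OF B] unfolding Gimp_def by auto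
  qed
next
  assume h: "B \<subseteq> Gimp A C"
  show "B \<inter> A \<subseteq> C"
  proof
    fix u assume "u \<in> B \<inter> A"
    then show "u \<in> C" using h unfolding Gimp_def leX_def by auto
  qed
qed

lemma relT'_iff:
  assumes H: "heyting_alg imp" and x: "is_filter x" and y: "is_ideal y" and uf: "is_filter u"
  shows "relT' imp u x y \<longleftrightarrow> (\<exists>a\<in>x. \<exists>b\<in>y. imp a b \<in> u)"
proof
  assume "relT' imp u x y"
  moreover have "Dset imp x y \<in> idealsY" using Dset_ideal[OF H x y] unfolding idealsY_def by auto
  moreover have "relT imp (Dset imp x y) x y" unfolding relT_def using leadsto_sub_Dset[OF H x y] .
  ultimately have "perp u (Dset imp x y)" unfolding relT'_def by auto
  then obtain c a b where "c \<in> u" "a \<in> x" "b \<in> y" "c \<le> imp a b"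
    unfolding perp_def Dset_def by auto
  then show "\<exists>a\<in>x. \<exists>b\<in>y. imp a b \<in> u" using filter_up[OF uf] by blast
next
  assume "\<exists>a\<in>x. \<exists>b\<in>y. imp a b \<in> u"
  then obtain a b where ab: "a \<in> x" "b \<in> y" "imp a b \<in> u" by auto
  show "relT' imp u x y" unfolding relT'_def relT_def
  proof (intro ballI impI)
    fix v assume "v \<in> idealsY" and lv: "leadsto imp x y \<subseteq> v"
    have "imp a b \<in> {imp a b | a b. a \<in> x \<and> b \<in> y}" using ab by blast
    then have "imp a b \<in> leadsto imp x y"
      using gens_sub_ideal_gen unfolding leadsto_def by (rule subsetD[rotated])
    with lv have "imp a b \<in> v" by (rule subsetD)
    then show "perp u v" using ab(3) unfolding perp_def by blast
  qed
qed


lemma Gimp_GimpT: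
  fixes imp :: "'a::bounded_lattice \<Rightarrow> 'a \<Rightarrow> 'a" and A C :: "'a set set"
  assumes H: "heyting_alg imp" and A: "stable A" and C: "stable C"
  shows "Gimp A C = GimpT imp A C"
proof
  show "Gimp A C \<subseteq> GimpT imp A C"
  proof
    fix u assume u: "u \<in> Gimp A C"
    then have uf: "is_filter u" unfolding Gimp_def filtersX_def by auto
    have "relT' imp u x y" if x: "x \<in> filtersX" and y: "y \<in> idealsY" and xA: "x \<in> A"
      and yC: "\<forall>c\<in>C. perp c y" for x y
    proof -
      have xf: "is_filter x" and yi: "is_ideal y" using x y unfolding filtersX_def idealsY_def by auto
      have Jf: "is_filter (Jf u x)" using Jf_filter[OF uf xf] .
      have "Jf u x \<in> A" using stable_up[OF A xA Jf Jf_right[OF uf]] .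
      moreover have "leX u (Jf u x)" using leX_iff[OF Jf] Jf_left[OF xf] by auto
      ultimately have "Jf u x \<in> C" using u Jf unfolding Gimp_def filtersX_def by auto
      then have "perp (Jf u x) y" using yC by auto
      then obtain c p q where "c \<in> y" "p \<in> u" "q \<in> x" "inf p q \<le> c"
        unfolding perp_def Jf_def by auto
      then have "inf p q \<in> y" using ideal_down[OF yi] by auto
      moreover have "p \<le> imp q (inf p q)" using hres[OF H] by auto
      ultimately have "imp q (inf p q) \<in> u" "inf p q \<in> y"
        using filter_up[OF uf] `p \<in> u` by auto
      then show ?thesis using relT'_iff[OF H xf yi uf] `q \<in> x` by blast
    qed
    then show "u \<in> GimpT imp A C" using u unfolding GimpT_def Gimp_def by auto
  qed
next
  show "GimpT imp A C \<subseteq> Gimp A C"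
  proof
    fix u assume u: "u \<in> GimpT imp A C"
    then have uf: "is_filter u" and uX: "u \<in> filtersX" unfolding GimpT_def filtersX_def by auto
    have "z \<in> C" if z: "z \<in> filtersX" and zA: "z \<in> A" and l: "leX u z" for z
    proof -
      have zf: "is_filter z" using z unfolding filtersX_def by auto
      have uz: "u \<subseteq> z" using l leX_iff[OF zf] by auto
      have "perp z y" if y: "y \<in> rperp C" for y
      proof -
        have yi: "is_ideal y" and yY: "y \<in> idealsY" using y unfolding rperp_def idealsY_def by auto
        have yC: "\<forall>c\<in>C. perp c y" using y unfolding rperp_def by auto
        have "relT' imp u z y" using u z yY zA yC unfolding GimpT_def by auto
        then obtain a b where "a \<in> z" "b \<in> y" "imp a b \<in> u" using relT'_iff[OF H zf yi uf] by auto
        then have "inf (imp a b) a \<in> z" using uz filter_inf[OF zf] by auto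
        then have "b \<in> z" using filter_up[OF zf] hmp[OF H] by blast
        then show ?thesis using `b \<in> y` unfolding perp_def by auto
      qed
      then have "z \<in> lperp (rperp C)" using z unfolding lperp_def by auto
      then show ?thesis using C unfolding stable_def by auto
    qed
    then show "u \<in> Gimp A C" using uX unfolding Gimp_def by auto
  qed
qed

section \<open>The sets X_a\<close>

lemma Xa_stable: "stable (Xa a)"
proof -
  have "lperp (rperp (Xa a)) \<subseteq> Xa a"
  proof
    fix x assume x: "x \<in> lperp (rperp (Xa a))"
    have "{c. c \<le> a} \<in> rperp (Xa a)"
      unfolding rperp_def Xa_def filtersX_def perp_def using pideal_Y by auto
    then have "a \<in> x" using in_lperp_pideal[OF x] by auto
    then show "x \<in> Xa a" using x lperp_sub unfolding Xa_def by auto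
  qed
  moreover have "Xa a \<subseteq> filtersX" unfolding Xa_def by auto
  ultimately show ?thesis using ext_l unfolding stable_def by blast
qed

lemma Xa_GX: "Xa a \<in> GX" using Xa_stable unfolding GX_def by auto

lemma pf_in_Xa: "{c. a \<le> c} \<in> Xa b \<longleftrightarrow> a \<le> b"
  unfolding Xa_def using pfilter_X by auto

lemma Xa_inf: "Xa (inf a b) = GInf {Xa a, Xa b}"
proof
  show "Xa (inf a b) \<subseteq> GInf {Xa a, Xa b}"
    unfolding GInf_def Xa_def filtersX_def using filter_up[of _ "inf a b"] by auto
  show "GInf {Xa a, Xa b} \<subseteq> Xa (inf a b)"
    unfolding GInf_def Xa_def filtersX_def using filter_inf[of _ a b] by auto
qed

lemma Xa_top: "Xa top = GInf {}"
  unfolding GInf_def Xa_def filtersX_def using filter_top by auto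

lemma Xa_sup: "Xa (sup a b) = GSup {Xa a, Xa b}"
proof
  show "Xa (sup a b) \<subseteq> GSup {Xa a, Xa b}"
  proof
    fix x assume x: "x \<in> Xa (sup a b)"
    have "perp x y" if y: "y \<in> rperp (Xa a \<union> Xa b)" for y
    proof -
      have yi: "is_ideal y" using y unfolding rperp_def idealsY_def by auto
      have "perp {c. a \<le> c} y" "perp {c. b \<le> c} y"
        using y pf_in_Xa[of a a] pf_in_Xa[of b b] unfolding rperp_def by auto
      then have "a \<in> y" "b \<in> y" using perp_pfilter[OF yi] by auto
      then have "sup a b \<in> y" using ideal_sup[OF yi] by auto
      then show ?thesis using x unfolding Xa_def perp_def by auto
    qed
    then show "x \<in> GSup {Xa a, Xa b}" using x unfolding GSup_def lperp_def Xa_def by auto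
  qed
next
  show "GSup {Xa a, Xa b} \<subseteq> Xa (sup a b)"
  proof
    fix x assume x: "x \<in> GSup {Xa a, Xa b}"
    have "{c. c \<le> sup a b} \<in> rperp (Xa a \<union> Xa b)"
      unfolding rperp_def Xa_def filtersX_def perp_def using pideal_Y by auto
    then have "sup a b \<in> x" using in_lperp_pideal x unfolding GSup_def by auto
    then show "x \<in> Xa (sup a b)" using x lperp_sub unfolding GSup_def Xa_def by auto
  qed
qed

lemma Xa_bot: "Xa (bot::'a::bounded_lattice) = GSup {}"
proof
  show "Xa (bot::'a) \<subseteq> GSup {}"
    unfolding Xa_def GSup_def lperp_def rperp_def perp_def idealsY_def using ideal_bot by auto
next
  show "GSup {} \<subseteq> Xa (bot::'a)"
  proof
    fix x assume x: "x \<in> GSup ({} :: 'a set set set)"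
    have "{c. c \<le> (bot::'a)} \<in> rperp (\<Union>{})" unfolding rperp_def using pideal_Y by auto
    then have "bot \<in> x" using in_lperp_pideal x unfolding GSup_def by auto
    then show "x \<in> Xa bot" using x lperp_sub unfolding GSup_def Xa_def by auto
  qed
qed

lemma Xa_inj: "inj Xa"
proof (rule injI)
  fix a b :: 'a assume e: "Xa a = Xa b"
  have "a \<le> b" using pf_in_Xa[of a a] pf_in_Xa[of a b] e by auto
  moreover have "b \<le> a" using pf_in_Xa[of b b] pf_in_Xa[of b a] e by auto
  ultimately show "a = b" by auto
qed

lemma GInf_Xa_image: "GInf (Xa ` S) = {x \<in> filtersX. S \<subseteq> x}"
  unfolding GInf_def Xa_def by auto

lemma density1:
  assumes A: "A \<in> GX" shows "A = GSup {GInf (Xa ` S) | S. S \<in> A}"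
proof -
  have A': "stable A" using A unfolding GX_def by auto
  have "\<Union>{GInf (Xa ` S) | S. S \<in> A} = A"
  proof
    show "\<Union>{GInf (Xa ` S) | S. S \<in> A} \<subseteq> A"
      using stable_up[OF A'] unfolding GInf_Xa_image filtersX_def by blast
    show "A \<subseteq> \<Union>{GInf (Xa ` S) | S. S \<in> A}"
      using stable_sub[OF A'] unfolding GInf_Xa_image by blast
  qed
  then show ?thesis using A' unfolding GSup_def stable_def by auto
qed

lemma GSup_Xa_image: "GSup (Xa ` y) = lperp (rperp (\<Union>(Xa ` y)))"
  unfolding GSup_def ..

lemma density2:
  assumes A: "A \<in> GX" shows "A = GInf {GSup (Xa ` S) | S. S \<in> rperp A}"
proof -
  have A': "stable A" using A unfolding GX_def by auto
  show ?thesis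
  proof
    show "A \<subseteq> GInf {GSup (Xa ` S) | S. S \<in> rperp A}"
    proof
      fix x assume x: "x \<in> A"
      have xX: "x \<in> filtersX" using x stable_sub[OF A'] by auto
      have "x \<in> GSup (Xa ` y)" if y: "y \<in> rperp A" for y
      proof -
        obtain a where "a \<in> x" "a \<in> y" using x y unfolding rperp_def perp_def by auto
        then have "x \<in> \<Union>(Xa ` y)" using xX unfolding Xa_def by auto
        then show ?thesis using ext_l[of "\<Union>(Xa ` y)"] unfolding GSup_def Xa_def by auto
      qed
      then show "x \<in> GInf {GSup (Xa ` S) | S. S \<in> rperp A}" using xX unfolding GInf_def by auto
    qed
  next
    show "GInf {GSup (Xa ` S) | S. S \<in> rperp A} \<subseteq> A"
    proof
      fix x assume x: "x \<in> GInf {GSup (Xa ` S) | S. S \<in> rperp A}"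
      have "perp x y" if y: "y \<in> rperp A" for y
      proof -
        have yi: "is_ideal y" and yY: "y \<in> idealsY" using y unfolding rperp_def idealsY_def by auto
        have "x \<in> lperp (rperp (\<Union>(Xa ` y)))" using x y unfolding GInf_def GSup_def by auto
        moreover have "y \<in> rperp (\<Union>(Xa ` y))"
          using yY unfolding rperp_def Xa_def perp_def by auto
        ultimately show ?thesis unfolding lperp_def by auto
      qed
      then have "x \<in> lperp (rperp A)" using x unfolding GInf_def lperp_def by auto
      then show "x \<in> A" using A' unfolding stable_def by auto
    qed
  qed
qed

definition Fg :: "'a::bounded_lattice set \<Rightarrow> 'a set" where
  "Fg S = {c. \<exists>S'. finite S' \<and> S' \<subseteq> S \<and> (\<forall>F. is_filter F \<and> S' \<subseteq> F \<longrightarrow> c \<in> F)}"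

definition Ig :: "'a::bounded_lattice set \<Rightarrow> 'a set" where
  "Ig S = {c. \<exists>S'. finite S' \<and> S' \<subseteq> S \<and> (\<forall>F. is_ideal F \<and> S' \<subseteq> F \<longrightarrow> c \<in> F)}"

lemma Fg_filter: "is_filter (Fg S)"
  unfolding is_filter_def
proof (intro conjI ballI allI impI)
  have "top \<in> Fg S" unfolding Fg_def using filter_top by (intro CollectI exI[of _ "{}"]) auto
  then show "Fg S \<noteq> {}" by auto
next
  fix a b assume "a \<in> Fg S" and ab: "a \<le> b"
  then obtain S' where S': "finite S'" "S' \<subseteq> S" "\<forall>F. is_filter F \<and> S' \<subseteq> F \<longrightarrow> a \<in> F"
    unfolding Fg_def by auto
  have "\<forall>F. is_filter F \<and> S' \<subseteq> F \<longrightarrow> b \<in> F"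
  proof (intro allI impI)
    fix F assume "is_filter F \<and> S' \<subseteq> F"
    then show "b \<in> F" using S'(3) filter_up[of F a b] ab by blast
  qed
  then show "b \<in> Fg S" unfolding Fg_def using S' by blast
next
  fix a b assume "a \<in> Fg S" "b \<in> Fg S"
  then obtain S1 S2 where "finite S1" "S1 \<subseteq> S" "\<forall>F. is_filter F \<and> S1 \<subseteq> F \<longrightarrow> a \<in> F"
    "finite S2" "S2 \<subseteq> S" "\<forall>F. is_filter F \<and> S2 \<subseteq> F \<longrightarrow> b \<in> F" unfolding Fg_def by auto
  then have "finite (S1 \<union> S2)" "S1 \<union> S2 \<subseteq> S" "\<forall>F. is_filter F \<and> S1 \<union> S2 \<subseteq> F \<longrightarrow> inf a b \<in> F"
    using filter_inf by (auto; blast)+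
  then show "inf a b \<in> Fg S" unfolding Fg_def by blast
qed

lemma Ig_ideal: "is_ideal (Ig S)"
  unfolding is_ideal_def
proof (intro conjI ballI allI impI)
  have "bot \<in> Ig S" unfolding Ig_def using ideal_bot by (intro CollectI exI[of _ "{}"]) auto
  then show "Ig S \<noteq> {}" by auto
next
  fix a b assume "a \<in> Ig S" and ab: "b \<le> a"
  then obtain S' where S': "finite S'" "S' \<subseteq> S" "\<forall>F. is_ideal F \<and> S' \<subseteq> F \<longrightarrow> a \<in> F"
    unfolding Ig_def by auto
  have "\<forall>F. is_ideal F \<and> S' \<subseteq> F \<longrightarrow> b \<in> F"
  proof (intro allI impI)
    fix F assume "is_ideal F \<and> S' \<subseteq> F"
    then show "b \<in> F" using S'(3) ideal_down[of F a b] ab by blast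
  qed
  then show "b \<in> Ig S" unfolding Ig_def using S' by blast
next
  fix a b assume "a \<in> Ig S" "b \<in> Ig S"
  then obtain S1 S2 where "finite S1" "S1 \<subseteq> S" "\<forall>F. is_ideal F \<and> S1 \<subseteq> F \<longrightarrow> a \<in> F"
    "finite S2" "S2 \<subseteq> S" "\<forall>F. is_ideal F \<and> S2 \<subseteq> F \<longrightarrow> b \<in> F" unfolding Ig_def by auto
  then have "finite (S1 \<union> S2)" "S1 \<union> S2 \<subseteq> S" "\<forall>F. is_ideal F \<and> S1 \<union> S2 \<subseteq> F \<longrightarrow> sup a b \<in> F"
    using ideal_sup by (auto; blast)+
  then show "sup a b \<in> Ig S" unfolding Ig_def by blast
qed

lemma Fg_sup: "S \<subseteq> Fg S"
proof
  fix s assume "s \<in> S"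
  then have "finite {s}" "{s} \<subseteq> S" "\<forall>F. is_filter F \<and> {s} \<subseteq> F \<longrightarrow> s \<in> F" by auto
  then show "s \<in> Fg S" unfolding Fg_def by blast
qed

lemma Ig_sup: "S \<subseteq> Ig S"
proof
  fix s assume "s \<in> S"
  then have "finite {s}" "{s} \<subseteq> S" "\<forall>F. is_ideal F \<and> {s} \<subseteq> F \<longrightarrow> s \<in> F" by auto
  then show "s \<in> Ig S" unfolding Ig_def by blast
qed

lemma compactness:
  assumes "GInf (Xa ` S) \<subseteq> GSup (Xa ` T)"
  shows "\<exists>S'\<subseteq>S. \<exists>T'\<subseteq>T. finite S' \<and> finite T' \<and> GInf (Xa ` S') \<subseteq> GSup (Xa ` T')"
proof -
  have "Fg S \<in> GInf (Xa ` S)" unfolding GInf_Xa_image filtersX_def using Fg_filter Fg_sup by auto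
  then have "Fg S \<in> lperp (rperp (\<Union>(Xa ` T)))" using assms unfolding GSup_def by auto
  moreover have "Ig T \<in> rperp (\<Union>(Xa ` T))"
    unfolding rperp_def idealsY_def Xa_def perp_def using Ig_ideal Ig_sup by blast
  ultimately have "perp (Fg S) (Ig T)" unfolding lperp_def by auto
  then obtain c S' T' where c: "finite S'" "S' \<subseteq> S" "\<forall>F. is_filter F \<and> S' \<subseteq> F \<longrightarrow> c \<in> F"
     "finite T'" "T' \<subseteq> T" "\<forall>F. is_ideal F \<and> T' \<subseteq> F \<longrightarrow> c \<in> F"
    unfolding perp_def Fg_def Ig_def by auto
  have "GInf (Xa ` S') \<subseteq> GSup (Xa ` T')"
  proof
    fix x assume x: "x \<in> GInf (Xa ` S')"
    then have xf: "is_filter x" and "S' \<subseteq> x" unfolding GInf_Xa_image filtersX_def by auto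
    then have cx: "c \<in> x" using c by auto
    have "perp x y" if y: "y \<in> rperp (\<Union>(Xa ` T'))" for y
    proof -
      have yi: "is_ideal y" using y unfolding rperp_def idealsY_def by auto
      have "t \<in> y" if "t \<in> T'" for t
        using y that pf_in_Xa[of t t] perp_pfilter[OF yi] unfolding rperp_def by auto
      then have "c \<in> y" using c yi by auto
      then show ?thesis using cx unfolding perp_def by auto
    qed
    then show "x \<in> GSup (Xa ` T')" using xf unfolding GSup_def lperp_def filtersX_def by auto
  qed
  then show ?thesis using c by blast
qed

lemma canon: "canonical_extension GX GInf GSup (Xa :: 'a::bounded_lattice \<Rightarrow> 'a set set)"
  unfolding canonical_extension_def
proof (intro conjI allI impI ballI)
  show "complete_lattice_on GX GInf GSup" by (rule GX_complete)
  show "range Xa \<subseteq> GX" using Xa_GX by auto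
  show "inj (Xa :: 'a \<Rightarrow> 'a set set)" by (rule Xa_inj)
  show "\<And>a b. Xa (inf a b) = GInf {Xa a, Xa b}" by (rule Xa_inf)
  show "\<And>a b. Xa (sup a b) = GSup {Xa a, Xa b}" by (rule Xa_sup)
  show "Xa bot = GSup {}" by (rule Xa_bot)
  show "Xa top = GInf {}" by (rule Xa_top)
  show "\<And>A. A \<in> GX \<Longrightarrow> \<exists>\<S>. A = GSup {GInf (Xa ` S) |S. S \<in> \<S>}"
    using density1 by blast
  show "\<And>A. A \<in> GX \<Longrightarrow> \<exists>\<S>. A = GInf {GSup (Xa ` S) |S. S \<in> \<S>}"
    using density2 by blast
  show "\<And>S T. GInf (Xa ` S) \<subseteq> GSup (Xa ` T) \<Longrightarrow>
        \<exists>S'\<subseteq>S. \<exists>T'\<subseteq>T. finite S' \<and> finite T' \<and> GInf (Xa ` S') \<subseteq> GSup (Xa ` T')"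
    by (rule compactness)
qed


section \<open>Compact open stable sets\<close>

lemma gen_open:
  assumes "generate_topology_on (range Xa) U" "x \<in> U" "is_filter x"
  shows "\<exists>b\<in>x. Xa b \<subseteq> U"
  using assms
proof (induction arbitrary: x rule: generate_topology_on.induct)
  case Empty then show ?case by auto
next
  case (Int a b)
  then obtain b1 b2 where "b1 \<in> x" "Xa b1 \<subseteq> a" "b2 \<in> x" "Xa b2 \<subseteq> b" by blast
  moreover have "Xa (inf b1 b2) \<subseteq> Xa b1" "Xa (inf b1 b2) \<subseteq> Xa b2"
    unfolding Xa_def filtersX_def using filter_up by fastforce+
  moreover have "inf b1 b2 \<in> x" using filter_inf Int calculation by blast
  ultimately show ?case by blast
next
  case (UN K)
  then obtain k where "k \<in> K" "x \<in> k" by auto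
  then obtain b where "b \<in> x" "Xa b \<subseteq> k" using UN by blast
  then show ?case using `k \<in> K` by blast
next
  case (Basis s)
  then obtain c where "s = Xa c" by auto
  then show ?case using Basis unfolding Xa_def by auto
qed

lemma topX_open: "openin topX U \<longleftrightarrow> generate_topology_on (range Xa) U"
  unfolding topX_def by (rule openin_topology_generated_by_iff)

lemma topX_space: "topspace topX = (filtersX :: 'a::bounded_lattice set set)"
proof -
  have "\<Union>(range (Xa :: 'a \<Rightarrow> 'a set set)) = filtersX"
    unfolding Xa_def filtersX_def using filter_top by auto
  then show ?thesis unfolding topX_def by simp
qed

lemma Xa_KO: "Xa a \<in> KOGX"
proof -
  have op: "openin topX (Xa a)" unfolding topX_open by (rule generate_topology_on.Basis) auto
  have "compactin topX (Xa a)"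
    unfolding compactin_def
  proof (intro conjI allI impI)
    show "Xa a \<subseteq> topspace topX" unfolding topX_space Xa_def by auto
    fix \<U> assume U: "(\<forall>U\<in>\<U>. openin topX U) \<and> Xa a \<subseteq> \<Union>\<U>"
    have "{c. a \<le> c} \<in> Xa a" using pf_in_Xa by auto
    then obtain U where "U \<in> \<U>" "{c. a \<le> c} \<in> U" using U by auto
    moreover have "generate_topology_on (range Xa) U" using U calculation topX_open by auto
    ultimately obtain b where "a \<le> b" "Xa b \<subseteq> U" using gen_open pfilter by fastforce
    have "Xa a \<subseteq> Xa b"
    proof
      fix x assume "x \<in> Xa a"
      then have "is_filter x" "a \<in> x" unfolding Xa_def filtersX_def by auto
      then have "b \<in> x" using filter_up `a \<le> b` by blast
      then show "x \<in> Xa b" using `x \<in> Xa a` unfolding Xa_def by auto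
    qed
    then have "Xa a \<subseteq> U" using `Xa b \<subseteq> U` by auto
    then show "\<exists>\<F>. finite \<F> \<and> \<F> \<subseteq> \<U> \<and> Xa a \<subseteq> \<Union>\<F>"
      using `U \<in> \<U>` by (intro exI[of _ "{U}"]) auto
  qed
  then show ?thesis using op Xa_GX unfolding KOGX_def by auto
qed

lemma finite_join:
  "finite B \<Longrightarrow> \<exists>c::'a::bounded_lattice. (\<forall>b\<in>B. b \<le> c) \<and> (\<forall>y. is_ideal y \<and> B \<subseteq> y \<longrightarrow> c \<in> y)"
proof (induction rule: finite_induct)
  case empty then show ?case using ideal_bot by auto
next
  case (insert b B)
  then obtain c where c: "\<forall>b\<in>B. b \<le> c" "\<forall>y. is_ideal y \<and> B \<subseteq> y \<longrightarrow> c \<in> y" by auto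
  have "\<forall>b'\<in>insert b B. b' \<le> sup b c" using c by (auto intro: le_supI2)
  moreover have "\<forall>y. is_ideal y \<and> insert b B \<subseteq> y \<longrightarrow> sup b c \<in> y"
    using c ideal_sup by blast
  ultimately show ?case by blast
qed

lemma KO_Xa:
  assumes A: "A \<in> KOGX" shows "A \<in> range Xa"
proof -
  have As: "stable A" and op: "openin topX A" and cp: "compactin topX A"
    using A unfolding KOGX_def GX_def by auto
  have gen: "generate_topology_on (range Xa) A" using op topX_open by auto
  let ?U = "Xa ` {b. Xa b \<subseteq> A}"
  have "\<forall>U\<in>?U. openin topX U" unfolding topX_open by (auto intro: generate_topology_on.Basis)
  moreover have "A \<subseteq> \<Union>?U"
  proof
    fix x assume "x \<in> A"
    moreover then have "is_filter x" using stable_sub[OF As] unfolding filtersX_def by auto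
    ultimately obtain b where "b \<in> x" "Xa b \<subseteq> A" using gen_open[OF gen] by blast
    then show "x \<in> \<Union>?U" using `is_filter x` unfolding Xa_def filtersX_def by auto
  qed
  ultimately obtain F where F: "finite F" "F \<subseteq> ?U" "A \<subseteq> \<Union>F"
    using cp unfolding compactin_def by meson
  then obtain B where B: "B \<subseteq> {b. Xa b \<subseteq> A}" "finite B" "F = Xa ` B"
    by (meson finite_subset_image)
  obtain c where c: "\<forall>b\<in>B. b \<le> c" "\<forall>y. is_ideal y \<and> B \<subseteq> y \<longrightarrow> c \<in> y"
    using finite_join[OF B(2)] by auto
  have "A \<subseteq> Xa c"
  proof
    fix x assume "x \<in> A"
    then obtain b where "b \<in> B" "x \<in> Xa b" using F B by auto
    then show "x \<in> Xa c" using c filter_up unfolding Xa_def filtersX_def by blast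
  qed
  moreover have "Xa c \<subseteq> A"
  proof
    fix x assume x: "x \<in> Xa c"
    have "perp x y" if y: "y \<in> rperp A" for y
    proof -
      have yi: "is_ideal y" using y unfolding rperp_def idealsY_def by auto
      have "b \<in> y" if "b \<in> B" for b
      proof -
        have "{c. b \<le> c} \<in> A" using B that pf_in_Xa[of b b] by auto
        then have "perp {c. b \<le> c} y" using y unfolding rperp_def by auto
        then show ?thesis using perp_pfilter[OF yi] by auto
      qed
      then have "c \<in> y" using c yi by auto
      then show ?thesis using x unfolding Xa_def perp_def by auto
    qed
    then have "x \<in> lperp (rperp A)" using x unfolding Xa_def lperp_def by auto
    then show "x \<in> A" using As unfolding stable_def by auto
  qed
  ultimately show ?thesis by auto
qed

lemma range_KO: "range Xa = (KOGX :: 'a::bounded_lattice set set set)"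
  using Xa_KO KO_Xa by blast

lemma Xa_imp:
  fixes imp :: "'a::bounded_lattice \<Rightarrow> 'a \<Rightarrow> 'a"
  assumes H: "heyting_alg imp"
  shows "Xa (imp a b) = Gimp (Xa a) (Xa b)"
proof
  show "Xa (imp a b) \<subseteq> Gimp (Xa a) (Xa b)"
  proof
    fix u assume u: "u \<in> Xa (imp a b)"
    have "z \<in> Xa b" if "z \<in> filtersX" "z \<in> Xa a" "leX u z" for z
    proof -
      have zf: "is_filter z" using that unfolding filtersX_def by auto
      have "imp a b \<in> z" "a \<in> z" using u that leX_iff[OF zf] unfolding Xa_def by auto
      then have "inf (imp a b) a \<in> z" using filter_inf[OF zf] by auto
      then have "b \<in> z" using filter_up[OF zf] hmp[OF H] by blast
      then show ?thesis using that unfolding Xa_def by auto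
    qed
    then show "u \<in> Gimp (Xa a) (Xa b)" using u unfolding Gimp_def Xa_def by auto
  qed
next
  show "Gimp (Xa a) (Xa b) \<subseteq> Xa (imp a b)"
  proof
    fix u assume u: "u \<in> Gimp (Xa a) (Xa b)"
    then have uf: "is_filter u" and uX: "u \<in> filtersX" unfolding Gimp_def filtersX_def by auto
    let ?z = "Jf u {c. a \<le> c}"
    have zf: "is_filter ?z" using Jf_filter[OF uf pfilter] .
    have "a \<in> ?z" using Jf_right[OF uf, of "{c. a \<le> c}"] by auto
    moreover have "leX u ?z" using leX_iff[OF zf] Jf_left[OF pfilter] by auto
    ultimately have "?z \<in> Xa b" using u zf unfolding Gimp_def Xa_def filtersX_def by auto
    then obtain p q where "p \<in> u" "a \<le> q" "inf p q \<le> b" unfolding Xa_def Jf_def by auto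
    then have "inf p a \<le> b" by (meson inf_mono order_refl order_trans)
    then have "p \<le> imp a b" using hres[OF H] by auto
    then have "imp a b \<in> u" using filter_up[OF uf] `p \<in> u` by auto
    then show "u \<in> Xa (imp a b)" using uX unfolding Xa_def by auto
  qed
qed

theorem corollary4p6:
  fixes imp :: "'a::bounded_lattice \<Rightarrow> 'a \<Rightarrow> 'a"
  assumes "heyting_alg imp"
  shows "complete_lattice_on (GX :: 'a set set set) GInf GSup
    \<and> (\<forall>A\<in>(GX :: 'a set set set). \<forall>C\<in>GX. Gimp A C \<in> GX \<and> (\<forall>B\<in>GX. B \<inter> A \<subseteq> C \<longleftrightarrow> B \<subseteq> Gimp A C))
    \<and> (\<forall>A\<in>(GX :: 'a set set set). \<forall>C\<in>GX. Gimp A C = GimpT imp A C)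
    \<and> canonical_extension GX GInf GSup (Xa :: 'a \<Rightarrow> 'a set set)
    \<and> range Xa = KOGX
    \<and> (\<forall>a b. Xa (imp a b) = Gimp (Xa a) (Xa b))"
proof (intro conjI ballI allI)
  show "complete_lattice_on (GX :: 'a set set set) GInf GSup" by (rule GX_complete)
  fix A C :: "'a set set" assume A: "A \<in> GX" and C: "C \<in> GX"
  then have As: "stable A" and Cs: "stable C" unfolding GX_def by auto
  show "Gimp A C \<in> GX" using Gimp_stable[OF assms As Cs] unfolding GX_def by auto
  show "Gimp A C = GimpT imp A C" using Gimp_GimpT[OF assms As Cs] .
  fix B :: "'a set set" assume "B \<in> GX"
  then show "B \<inter> A \<subseteq> C \<longleftrightarrow> B \<subseteq> Gimp A C" using Gimp_res[OF As] unfolding GX_def by auto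
next
  show "canonical_extension GX GInf GSup (Xa :: 'a \<Rightarrow> 'a set set)" by (rule canon)
  show "range Xa = KOGX" by (rule range_KO)
  fix a b :: 'a
  show "Xa (imp a b) = Gimp (Xa a) (Xa b)" using Xa_imp[OF assms] .
qed

end
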